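(* Let $v\in\Sigma^*$, let $u$ be a $v$-minimal word and $i\in\mathrm{supp}(u)$. The relation $\sigma_i$ on $\mathcal{I}_i$ is right-compatible: if $g\,\sigma_i\,f$, then $g\theta_i(a)\,\sigma_i\,f\theta_i(a)$ for every $a\in\Sigma^*$.
   Context: Let $\mathcal{A}=\langle Q,\Sigma,\delta\rangle$ be a synchronizing automaton with $n$ states $q_1,\dots,q_n$; write $q\cdot u$ for the action of $u\in\Sigma^*$ (extended to subsets) and $\mathrm{rk}(u)=|Q\cdot u|$. Each word acts linearly on $\mathbb{C}Q$ by $q\mapsto q\cdot u$, preserving $w^\perp=\{x:\langle x,q_1+\dots+q_n\rangle=0\}$; let $\rho:\Sigma^*\to\mathbb{M}_{n-1}(\mathbb{C})$ be the induced representation and $\mathcal{R}$ the $\mathbb{C}$-algebra generated by $\rho(\Sigma^* )$. Write $\mathcal{R}/\mathrm{Rad}(\mathcal{R})\cong\prod_{i=1}^k\mathbb{M}_{n_i}(\mathbb{C})$ (Jacobson radical, Wedderburn–Artin) and let $\theta_i:\Sigma^*\to\mathbb{M}_{n_i}(\mathbb{C})$ be $\rho$ followed by the quotient map and the $i$-th projection; $0_i$ is the zero matrix. The monoid $\theta_i(\Sigma^* )$ has a unique $0$-minimal ideal $\mathcal{I}_i$. The support of a word $z$ is $\mathrm{supp}(z)=\{i:\theta_i(z)\neq0_i\}$. For $v\in\Sigma^*$, a word $u\in\Sigma^*v\Sigma^*$ is $v$-minimal if $\mathrm{supp}(u)\neq\emptyset$ and there is no $z\in\Sigma^*v\Sigma^*$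 with $\emptyset\neq\mathrm{supp}(z)\subsetneq\mathrm{supp}(u)$. For such $u$, $i\in\mathrm{supp}(u)$ and $g\in\mathcal{I}_i$, a word $w$ $u$-represents $g$ if $w\in\Sigma^*u\Sigma^*$, $\theta_i(w)=g$, and either $g=0_i$ or $\mathrm{rk}(w)$ is minimum among all words $w'\in\Sigma^*u\Sigma^*$ with $\theta_i(w')=g$. Define the relation $\sigma_i$ on $\mathcal{I}_i$ by $g\,\sigma_i\,f$ iff either $g=f$, or there exist words $w_1,w_2$ that $u$-represent $g$ and $f$ respectively with $|Q\cdot w_1\cap Q\cdot w_2|>1$. *)

theory Defs
  imports "Jordan_Normal_Form.Matrix"
begin

text \<open>Automaton: states are 0..<n (state q_j is j-1), alphabet Sigma, transition delta.\<close>

definition act :: "(nat \<Rightarrow> 'a \<Rightarrow> nat) \<Rightarrow> nat \<Rightarrow> 'a list \<Rightarrow> nat" where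
  "act \<delta> q w = foldl \<delta> q w"

definition img :: "nat \<Rightarrow> (nat \<Rightarrow> 'a \<Rightarrow> nat) \<Rightarrow> 'a list \<Rightarrow> nat set" where
  "img n \<delta> w = (\<lambda>q. act \<delta> q w) ` {0..<n}"

definition rk :: "nat \<Rightarrow> (nat \<Rightarrow> 'a \<Rightarrow> nat) \<Rightarrow> 'a list \<Rightarrow> nat" where
  "rk n \<delta> w = card (img n \<delta> w)"

definition synchronizing_automaton :: "nat \<Rightarrow> 'a set \<Rightarrow> (nat \<Rightarrow> 'a \<Rightarrow> nat) \<Rightarrow> bool" where
  "synchronizing_automaton n \<Sigma> \<delta> \<longleftrightarrow>
     0 < n \<and> finite \<Sigma> \<and> (\<forall>q<n. \<forall>a\<in>\<Sigma>. \<delta> q a < n) \<and>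
     (\<exists>w\<in>lists \<Sigma>. rk n \<delta> w = 1)"

text \<open>The representation on the orthogonal complement of q_1+...+q_n, written as an
 (n-1)x(n-1) matrix w.r.t. the basis b_j = q_j - q_n, using row vectors (x maps to x * rho w),
 so that rho (u @ v) = rho u * rho v.\<close>

definition rho :: "nat \<Rightarrow> (nat \<Rightarrow> 'a \<Rightarrow> nat) \<Rightarrow> 'a list \<Rightarrow> complex mat" where
  "rho n \<delta> w = mat (n - 1) (n - 1)
     (\<lambda>(j, k). (if act \<delta> j w = k then 1 else 0) - (if act \<delta> (n - 1) w = k then 1 else 0))"

inductive_set gen_alg :: "nat \<Rightarrow> complex mat set \<Rightarrow> complex mat set" for d G where
  gen: "x \<in> G \<Longrightarrow> x \<in> gen_alg d G"
| zero: "0\<^sub>m d d \<in> gen_alg d G"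
| one: "1\<^sub>m d \<in> gen_alg d G"
| add: "x \<in> gen_alg d G \<Longrightarrow> y \<in> gen_alg d G \<Longrightarrow> x + y \<in> gen_alg d G"
| smult: "x \<in> gen_alg d G \<Longrightarrow> c \<cdot>\<^sub>m x \<in> gen_alg d G"
| mult: "x \<in> gen_alg d G \<Longrightarrow> y \<in> gen_alg d G \<Longrightarrow> x * y \<in> gen_alg d G"

definition algR :: "nat \<Rightarrow> 'a set \<Rightarrow> (nat \<Rightarrow> 'a \<Rightarrow> nat) \<Rightarrow> complex mat set" where
  "algR n \<Sigma> \<delta> = gen_alg (n - 1) (rho n \<delta> ` lists \<Sigma>)"

definition left_ideal :: "nat \<Rightarrow> complex mat set \<Rightarrow> complex mat set \<Rightarrow> bool" where
  "left_ideal d R L \<longleftrightarrow> L \<subseteq> R \<and> 0\<^sub>m d d \<in> L \<and> (\<forall>x\<in>L. \<forall>y\<in>L. x + y \<in> L) \<and>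
     (\<forall>x\<in>L. - x \<in> L) \<and> (\<forall>r\<in>R. \<forall>x\<in>L. r * x \<in> L)"

definition maximal_left_ideal :: "nat \<Rightarrow> complex mat set \<Rightarrow> complex mat set \<Rightarrow> bool" where
  "maximal_left_ideal d R L \<longleftrightarrow> left_ideal d R L \<and> L \<noteq> R \<and>
     (\<forall>L'. left_ideal d R L' \<and> L \<subseteq> L' \<and> L' \<noteq> R \<longrightarrow> L' = L)"

definition jacobson_radical :: "nat \<Rightarrow> complex mat set \<Rightarrow> complex mat set" where
  "jacobson_radical d R = {x \<in> R. \<forall>L. maximal_left_ideal d R L \<longrightarrow> x \<in> L}"

text \<open>Wedderburn--Artin data: Phi x i is the i-th component (i < k) of the image of x under
  R -> R/Rad(R) ~= prod_{i<k} M_{ns i}(C); i.e. Phi is a surjective unital algebra homomorphism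
  R -> prod_i M_{ns i}(C) with kernel Rad(R).\<close>

definition wedderburn_artin ::
  "nat \<Rightarrow> complex mat set \<Rightarrow> nat \<Rightarrow> (nat \<Rightarrow> nat) \<Rightarrow> (complex mat \<Rightarrow> nat \<Rightarrow> complex mat) \<Rightarrow> bool" where
  "wedderburn_artin d R k ns \<Phi> \<longleftrightarrow>
     (\<forall>i<k. 0 < ns i) \<and>
     (\<forall>x\<in>R. \<forall>i<k. \<Phi> x i \<in> carrier_mat (ns i) (ns i)) \<and>
     (\<forall>x\<in>R. \<forall>y\<in>R. \<forall>i<k. \<Phi> (x + y) i = \<Phi> x i + \<Phi> y i) \<and>
     (\<forall>x\<in>R. \<forall>c. \<forall>i<k. \<Phi> (c \<cdot>\<^sub>m x) i = c \<cdot>\<^sub>m \<Phi> x i) \<and>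
     (\<forall>x\<in>R. \<forall>y\<in>R. \<forall>i<k. \<Phi> (x * y) i = \<Phi> x i * \<Phi> y i) \<and>
     (\<forall>i<k. \<Phi> (1\<^sub>m d) i = 1\<^sub>m (ns i)) \<and>
     (\<forall>f. (\<forall>i<k. f i \<in> carrier_mat (ns i) (ns i)) \<longrightarrow> (\<exists>x\<in>R. \<forall>i<k. \<Phi> x i = f i)) \<and>
     (\<forall>x\<in>R. (\<forall>i<k. \<Phi> x i = 0\<^sub>m (ns i) (ns i)) \<longleftrightarrow> x \<in> jacobson_radical d R)"

definition theta :: "nat \<Rightarrow> (nat \<Rightarrow> 'a \<Rightarrow> nat) \<Rightarrow> (complex mat \<Rightarrow> nat \<Rightarrow> complex mat) \<Rightarrow> nat \<Rightarrow> 'a list \<Rightarrow> complex mat" where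
  "theta n \<delta> \<Phi> i w = \<Phi> (rho n \<delta> w) i"

definition monoid_ideal :: "'b::times set \<Rightarrow> 'b set \<Rightarrow> bool" where
  "monoid_ideal S I \<longleftrightarrow> I \<noteq> {} \<and> I \<subseteq> S \<and> (\<forall>s\<in>S. \<forall>x\<in>I. s * x \<in> I \<and> x * s \<in> I)"

definition zero_minimal_ideal :: "'b::times set \<Rightarrow> 'b \<Rightarrow> 'b set \<Rightarrow> bool" where
  "zero_minimal_ideal S z I \<longleftrightarrow> monoid_ideal S I \<and> I \<noteq> {z} \<and>
     (\<forall>J. monoid_ideal S J \<and> J \<subseteq> I \<longrightarrow> J = {z} \<or> J = I)"

definition idealI :: "'a set \<Rightarrow> nat \<Rightarrow> (nat \<Rightarrow> 'a \<Rightarrow> nat) \<Rightarrow> (nat \<Rightarrow> nat) \<Rightarrow> (complex mat \<Rightarrow> nat \<Rightarrow> complex mat) \<Rightarrow> nat \<Rightarrow> complex mat set" where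
  "idealI \<Sigma> n \<delta> ns \<Phi> i =
     (THE I. zero_minimal_ideal (theta n \<delta> \<Phi> i ` lists \<Sigma>) (0\<^sub>m (ns i) (ns i)) I)"

definition factors :: "'a set \<Rightarrow> 'a list \<Rightarrow> 'a list set" where
  "factors \<Sigma> v = {x @ v @ y | x y. x \<in> lists \<Sigma> \<and> y \<in> lists \<Sigma>}"

definition supp :: "nat \<Rightarrow> (nat \<Rightarrow> 'a \<Rightarrow> nat) \<Rightarrow> nat \<Rightarrow> (nat \<Rightarrow> nat) \<Rightarrow> (complex mat \<Rightarrow> nat \<Rightarrow> complex mat) \<Rightarrow> 'a list \<Rightarrow> nat set" where
  "supp n \<delta> k ns \<Phi> z = {i. i < k \<and> theta n \<delta> \<Phi> i z \<noteq> 0\<^sub>m (ns i) (ns i)}"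

definition v_minimal :: "'a set \<Rightarrow> nat \<Rightarrow> (nat \<Rightarrow> 'a \<Rightarrow> nat) \<Rightarrow> nat \<Rightarrow> (nat \<Rightarrow> nat) \<Rightarrow> (complex mat \<Rightarrow> nat \<Rightarrow> complex mat) \<Rightarrow> 'a list \<Rightarrow> 'a list \<Rightarrow> bool" where
  "v_minimal \<Sigma> n \<delta> k ns \<Phi> v u \<longleftrightarrow>
     u \<in> factors \<Sigma> v \<and> supp n \<delta> k ns \<Phi> u \<noteq> {} \<and>
     \<not> (\<exists>z\<in>factors \<Sigma> v. supp n \<delta> k ns \<Phi> z \<noteq> {} \<and> supp n \<delta> k ns \<Phi> z \<subset> supp n \<delta> k ns \<Phi> u)"

definition u_represents :: "'a set \<Rightarrow> nat \<Rightarrow> (nat \<Rightarrow> 'a \<Rightarrow> nat) \<Rightarrow> (nat \<Rightarrow> nat) \<Rightarrow> (complex mat \<Rightarrow> nat \<Rightarrow> complex mat) \<Rightarrow> 'a list \<Rightarrow> nat \<Rightarrow> 'a list \<Rightarrow> complex mat \<Rightarrow> bool" where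
  "u_represents \<Sigma> n \<delta> ns \<Phi> u i w g \<longleftrightarrow>
     w \<in> factors \<Sigma> u \<and> theta n \<delta> \<Phi> i w = g \<and>
     (g = 0\<^sub>m (ns i) (ns i) \<or>
      (\<forall>w'\<in>factors \<Sigma> u. theta n \<delta> \<Phi> i w' = g \<longrightarrow> rk n \<delta> w \<le> rk n \<delta> w'))"

definition sigma_rel :: "'a set \<Rightarrow> nat \<Rightarrow> (nat \<Rightarrow> 'a \<Rightarrow> nat) \<Rightarrow> (nat \<Rightarrow> nat) \<Rightarrow> (complex mat \<Rightarrow> nat \<Rightarrow> complex mat) \<Rightarrow> 'a list \<Rightarrow> nat \<Rightarrow> complex mat \<Rightarrow> complex mat \<Rightarrow> bool" where
  "sigma_rel \<Sigma> n \<delta> ns \<Phi> u i g f \<longleftrightarrow>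
     g \<in> idealI \<Sigma> n \<delta> ns \<Phi> i \<and> f \<in> idealI \<Sigma> n \<delta> ns \<Phi> i \<and>
     (g = f \<or> (\<exists>w1 w2. u_represents \<Sigma> n \<delta> ns \<Phi> u i w1 g \<and> u_represents \<Sigma> n \<delta> ns \<Phi> u i w2 f \<and>
                 card (img n \<delta> w1 \<inter> img n \<delta> w2) > 1))"

end

theory Submission
  imports Defs
begin



lemma act_append: "act \<delta> q (x @ y) = act \<delta> (act \<delta> q x) y"
  by (simp add: act_def)

lemma act_Nil[simp]: "act \<delta> q [] = q" by (simp add: act_def)

lemma act_range:
  assumes cl: "\<forall>q<n. \<forall>a\<in>\<Sigma>. \<delta> q a < n"
  shows "w \<in> lists \<Sigma> \<Longrightarrow> q < n \<Longrightarrow> act \<delta> q w < n"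
proof (induction w arbitrary: q rule: rev_induct)
  case Nil then show ?case by simp
next
  case (snoc x xs)
  then show ?case using cl by (simp add: act_def)
qed

lemma rho_carrier[simp]: "rho n \<delta> w \<in> carrier_mat (n - 1) (n - 1)"
  by (simp add: rho_def)

lemma rho_Nil: "rho n \<delta> [] = 1\<^sub>m (n - 1)"
  by (rule eq_matI) (auto simp: rho_def)

lemma sum_delta_aux:
  fixes X :: "nat \<Rightarrow> complex"
  assumes "p < n" "X (n - 1) = 0"
  shows "(\<Sum>m\<in>{0..<n - 1}. (if p = m then 1 else 0) * X m) = X p"
proof (cases "p = n - 1")
  case True
  then show ?thesis using assms by (simp)
next
  case False
  then have "p < n - 1" using assms by simp
  have "(\<Sum>m\<in>{0..<n - 1}. (if p = m then 1 else 0) * X m) = (\<Sum>m\<in>{0..<n - 1}. (if p = m then X m else 0))"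
    by (rule sum.cong) auto
  also have "\<dots> = X p" using \<open>p < n - 1\<close> by (simp add: sum.delta)
  finally show ?thesis .
qed

lemma rho_append:
  assumes cl: "\<forall>q<n. \<forall>a\<in>\<Sigma>. \<delta> q a < n" and n: "0 < n"
    and w1: "w1 \<in> lists \<Sigma>"
  shows "rho n \<delta> (w1 @ w2) = rho n \<delta> w1 * rho n \<delta> w2"
proof (rule eq_matI)
  fix j k assume j: "j < dim_row (rho n \<delta> w1 * rho n \<delta> w2)" and k: "k < dim_col (rho n \<delta> w1 * rho n \<delta> w2)"
  then have j': "j < n - 1" and k': "k < n - 1" by (auto simp: rho_def)
  define X where "X m = (if act \<delta> m w2 = k then 1 else 0) - (if act \<delta> (n - 1) w2 = k then 1 else (0::complex))" for m
  define p where "p = act \<delta> j w1"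
  define p' where "p' = act \<delta> (n - 1) w1"
  have p: "p < n" unfolding p_def using act_range[OF cl w1] j' by simp
  have p': "p' < n" unfolding p'_def using act_range[OF cl w1] n by simp
  have X0: "X (n - 1) = 0" by (simp add: X_def)
  have "(rho n \<delta> w1 * rho n \<delta> w2) $$ (j, k) =
     (\<Sum>m\<in>{0..<n - 1}. ((if p = m then 1 else 0) - (if p' = m then 1 else 0)) * X m)"
    using j' k' by (simp add: rho_def scalar_prod_def p_def p'_def X_def)
  also have "\<dots> = (\<Sum>m\<in>{0..<n - 1}. (if p = m then 1 else 0) * X m) - (\<Sum>m\<in>{0..<n - 1}. (if p' = m then 1 else 0) * X m)"
    by (simp add: left_diff_distrib sum_subtractf)
  also have "\<dots> = X p - X p'" using sum_delta_aux[of p n X, OF p X0] sum_delta_aux[of p' n X, OF p' X0] by simp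
  also have "\<dots> = rho n \<delta> (w1 @ w2) $$ (j, k)"
    using j' k' by (simp add: rho_def X_def p_def p'_def act_append)
  finally show "rho n \<delta> (w1 @ w2) $$ (j, k) = (rho n \<delta> w1 * rho n \<delta> w2) $$ (j, k)" by simp
qed (auto simp: rho_def)




lemma wa_pos: assumes "wedderburn_artin d R k ns \<Phi>" shows "\<forall>i<k. 0 < ns i"
  using assms unfolding wedderburn_artin_def by (elim conjE) assumption

lemma wa_carrier: assumes "wedderburn_artin d R k ns \<Phi>" shows "\<forall>x\<in>R. \<forall>i<k. \<Phi> x i \<in> carrier_mat (ns i) (ns i)"
  using assms unfolding wedderburn_artin_def by (elim conjE) assumption

lemma wa_add: assumes "wedderburn_artin d R k ns \<Phi>" shows "\<forall>x\<in>R. \<forall>y\<in>R. \<forall>i<k. \<Phi> (x + y) i = \<Phi> x i + \<Phi> y i"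
  using assms unfolding wedderburn_artin_def by (elim conjE) assumption

lemma wa_smult: assumes "wedderburn_artin d R k ns \<Phi>" shows "\<forall>x\<in>R. \<forall>c. \<forall>i<k. \<Phi> (c \<cdot>\<^sub>m x) i = c \<cdot>\<^sub>m \<Phi> x i"
  using assms unfolding wedderburn_artin_def by (elim conjE) assumption

lemma wa_mult: assumes "wedderburn_artin d R k ns \<Phi>" shows "\<forall>x\<in>R. \<forall>y\<in>R. \<forall>i<k. \<Phi> (x * y) i = \<Phi> x i * \<Phi> y i"
  using assms unfolding wedderburn_artin_def by (elim conjE) assumption

lemma wa_one: assumes "wedderburn_artin d R k ns \<Phi>" shows "\<forall>i<k. \<Phi> (1\<^sub>m d) i = 1\<^sub>m (ns i)"
  using assms unfolding wedderburn_artin_def by (elim conjE) assumption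

lemma wa_surj: assumes "wedderburn_artin d R k ns \<Phi>" shows "\<forall>f. (\<forall>i<k. f i \<in> carrier_mat (ns i) (ns i)) \<longrightarrow> (\<exists>x\<in>R. \<forall>i<k. \<Phi> x i = f i)"
  using assms unfolding wedderburn_artin_def by (elim conjE) assumption




lemma rho_in_algR: "w \<in> lists \<Sigma> \<Longrightarrow> rho n \<delta> w \<in> algR n \<Sigma> \<delta>"
  unfolding algR_def by (rule gen_alg.gen) auto

lemma Phi_zero:
  assumes W: "wedderburn_artin d R k ns \<Phi>" and z: "0\<^sub>m d d \<in> R" and i: "i < k"
  shows "\<Phi> (0\<^sub>m d d) i = 0\<^sub>m (ns i) (ns i)"
proof -
  have c: "\<Phi> (0\<^sub>m d d) i \<in> carrier_mat (ns i) (ns i)" using wa_carrier[OF W] z i by blast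
  have "\<Phi> ((0::complex) \<cdot>\<^sub>m 0\<^sub>m d d) i = 0 \<cdot>\<^sub>m \<Phi> (0\<^sub>m d d) i" using wa_smult[OF W] z i by blast
  moreover have "(0::complex) \<cdot>\<^sub>m 0\<^sub>m d d = 0\<^sub>m d d" by (rule eq_matI) auto
  moreover have "(0::complex) \<cdot>\<^sub>m \<Phi> (0\<^sub>m d d) i = 0\<^sub>m (ns i) (ns i)" using c by (intro eq_matI) auto
  ultimately show ?thesis by simp
qed

locale aut =
  fixes n k :: nat and \<Sigma> :: "'a set" and \<delta> :: "nat \<Rightarrow> 'a \<Rightarrow> nat"
    and ns :: "nat \<Rightarrow> nat" and \<Phi> :: "complex mat \<Rightarrow> nat \<Rightarrow> complex mat" and i :: nat
  assumes cl: "\<forall>q<n. \<forall>a\<in>\<Sigma>. \<delta> q a < n" and npos: "0 < n"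
    and W: "wedderburn_artin (n - 1) (algR n \<Sigma> \<delta>) k ns \<Phi>" and ik: "i < k"
begin

abbreviation "th \<equiv> theta n \<delta> \<Phi> i"
abbreviation "N \<equiv> ns i"
abbreviation "R \<equiv> algR n \<Sigma> \<delta>"

lemma Phi_carrier: "x \<in> R \<Longrightarrow> \<Phi> x i \<in> carrier_mat N N"
  using wa_carrier[OF W] ik by blast

lemma Phi_add: "x \<in> R \<Longrightarrow> y \<in> R \<Longrightarrow> \<Phi> (x + y) i = \<Phi> x i + \<Phi> y i"
  using wa_add[OF W] ik by blast

lemma Phi_smult: "x \<in> R \<Longrightarrow> \<Phi> (c \<cdot>\<^sub>m x) i = c \<cdot>\<^sub>m \<Phi> x i"
  using wa_smult[OF W] ik by blast

lemma Phi_mult: "x \<in> R \<Longrightarrow> y \<in> R \<Longrightarrow> \<Phi> (x * y) i = \<Phi> x i * \<Phi> y i"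
  using wa_mult[OF W] ik by blast

lemma Phi_one: "\<Phi> (1\<^sub>m (n - 1)) i = 1\<^sub>m N"
  using wa_one[OF W] ik by blast

lemma Npos: "0 < N"
  using wa_pos[OF W] ik by blast

lemma Phi_zero': "\<Phi> (0\<^sub>m (n - 1) (n - 1)) i = 0\<^sub>m N N"
  by (rule Phi_zero[OF W _ ik]) (simp add: algR_def gen_alg.zero)

lemma th_carrier[simp]: "w \<in> lists \<Sigma> \<Longrightarrow> th w \<in> carrier_mat N N"
  unfolding theta_def by (rule Phi_carrier[OF rho_in_algR])

lemma th_append: "w1 \<in> lists \<Sigma> \<Longrightarrow> w2 \<in> lists \<Sigma> \<Longrightarrow> th (w1 @ w2) = th w1 * th w2"
  unfolding theta_def using rho_append[OF cl npos] by (simp add: Phi_mult rho_in_algR)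

lemma th_Nil: "th [] = 1\<^sub>m N"
  unfolding theta_def rho_Nil by (rule Phi_one)

lemma prime_aux:
  assumes "x \<in> R"
  shows "\<And>A C. A \<in> carrier_mat N N \<Longrightarrow> C \<in> carrier_mat N N \<Longrightarrow>
     (\<forall>s\<in>lists \<Sigma>. A * th s * C = 0\<^sub>m N N) \<Longrightarrow> A * \<Phi> x i * C = 0\<^sub>m N N"
  using assms unfolding algR_def
proof (induction x rule: gen_alg.induct)
  case (gen x)
  then show ?case by (auto simp: theta_def)
next
  case zero
  then show ?case using Phi_zero' by simp
next
  case one
  then show ?case using Phi_one th_Nil by (metis lists.Nil)
next
  case (add x y)
  have cx: "\<Phi> x i \<in> carrier_mat N N" "\<Phi> y i \<in> carrier_mat N N"
    using add.hyps Phi_carrier unfolding algR_def by auto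
  have "A * \<Phi> (x + y) i * C = A * \<Phi> x i * C + A * \<Phi> y i * C"
    using add.hyps add.prems cx by (simp add: Phi_add[unfolded algR_def] mult_add_distrib_mat add_mult_distrib_mat[of _ N N])
  then show ?case using add by simp
next
  case (smult x c)
  have cx: "\<Phi> x i \<in> carrier_mat N N"
    using smult.hyps Phi_carrier unfolding algR_def by auto
  have "A * \<Phi> (c \<cdot>\<^sub>m x) i * C = c \<cdot>\<^sub>m (A * \<Phi> x i * C)"
    using smult.hyps smult.prems cx by (simp add: Phi_smult[unfolded algR_def] mult_smult_distrib[of _ N N] mult_smult_assoc_mat[of _ N N])
  then show ?case using smult by simp
next
  case (mult x y)
  have cx: "\<Phi> x i \<in> carrier_mat N N" "\<Phi> y i \<in> carrier_mat N N"
    using mult.hyps Phi_carrier unfolding algR_def by auto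
  have 1: "A * th s * \<Phi> y i * C = 0\<^sub>m N N" if s: "s \<in> lists \<Sigma>" for s
  proof -
    have "\<forall>t\<in>lists \<Sigma>. (A * th s) * th t * C = 0\<^sub>m N N"
    proof
      fix t assume t: "t \<in> lists \<Sigma>"
      have "(A * th s) * th t * C = A * th (s @ t) * C"
        using s t mult.prems by (simp add: th_append assoc_mult_mat[of A N N _ N _ N])
      then show "(A * th s) * th t * C = 0\<^sub>m N N" using mult.prems s t by simp
    qed
    then show ?thesis using mult.IH(2) mult.prems s by simp
  qed
  have 2: "\<forall>s\<in>lists \<Sigma>. A * th s * (\<Phi> y i * C) = 0\<^sub>m N N"
  proof
    fix s assume s: "s \<in> lists \<Sigma>"
    have "A * th s * (\<Phi> y i * C) = A * th s * \<Phi> y i * C"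
      using s mult.prems cx by (simp add: assoc_mult_mat[of "A * th s" N N _ N _ N])
    then show "A * th s * (\<Phi> y i * C) = 0\<^sub>m N N" using 1 s by simp
  qed
  have "A * \<Phi> x i * (\<Phi> y i * C) = 0\<^sub>m N N"
    apply (rule mult.IH(1))
    using mult.prems cx 2 by auto
  moreover have "A * (\<Phi> x i * \<Phi> y i) * C = A * \<Phi> x i * (\<Phi> y i * C)"
    using mult.prems cx by (simp add: assoc_mult_mat[of A N N _ N _ N])
  ultimately show ?case using mult.hyps mult.prems cx by (simp add: Phi_mult[unfolded algR_def])
qed

end



lemma mat_nonzero_entry:
  assumes "A \<in> carrier_mat m m" "A \<noteq> 0\<^sub>m m m"
  shows "\<exists>p<m. \<exists>q<m. A $$ (p, q) \<noteq> 0"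
proof (rule ccontr)
  assume "\<not> ?thesis"
  then have "A = 0\<^sub>m m m" using assms(1) by (intro eq_matI) auto
  then show False using assms(2) by simp
qed

lemma mat_prime:
  fixes A B :: "complex mat"
  assumes A: "A \<in> carrier_mat m m" "A \<noteq> 0\<^sub>m m m" and B: "B \<in> carrier_mat m m" "B \<noteq> 0\<^sub>m m m"
  shows "\<exists>M\<in>carrier_mat m m. A * M * B \<noteq> 0\<^sub>m m m"
proof -
  obtain p q where pq: "p < m" "q < m" "A $$ (p, q) \<noteq> 0" using mat_nonzero_entry[OF A] by blast
  obtain r s where rs: "r < m" "s < m" "B $$ (r, s) \<noteq> 0" using mat_nonzero_entry[OF B] by blast
  define M :: "complex mat" where "M = mat m m (\<lambda>(x, y). if x = q \<and> y = r then 1 else 0)"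
  have Mc: "M \<in> carrier_mat m m" by (simp add: M_def)
  have AM: "(A * M) $$ (p, l) = (if l = r then A $$ (p, q) else 0)" if l: "l < m" for l
  proof -
    have "(A * M) $$ (p, l) = (\<Sum>j\<in>{0..<m}. A $$ (p, j) * (if j = q \<and> l = r then 1 else 0))"
      using A(1) pq l by (simp add: M_def scalar_prod_def)
    also have "\<dots> = (\<Sum>j\<in>{0..<m}. if j = q then (if l = r then A $$ (p, q) else 0) else 0)"
      by (rule sum.cong) auto
    also have "\<dots> = (if l = r then A $$ (p, q) else 0)" using pq by (simp add: sum.delta)
    finally show ?thesis .
  qed
  define X where "X = A * M"
  have Xc: "X \<in> carrier_mat m m" using A(1) Mc by (simp add: X_def)
  have "(X * B) $$ (p, s) = (\<Sum>l\<in>{0..<m}. X $$ (p, l) * B $$ (l, s))"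
    using Xc B(1) pq rs by (simp add: scalar_prod_def)
  then have "(A * M * B) $$ (p, s) = (\<Sum>l\<in>{0..<m}. (A * M) $$ (p, l) * B $$ (l, s))"
    by (simp add: X_def)
  also have "\<dots> = (\<Sum>l\<in>{0..<m}. if l = r then A $$ (p, q) * B $$ (r, s) else 0)"
    by (rule sum.cong) (auto simp: AM)
  also have "\<dots> = A $$ (p, q) * B $$ (r, s)" using rs by (simp add: sum.delta)
  finally have "(A * M * B) $$ (p, s) \<noteq> 0" using pq rs by simp
  then have "A * M * B \<noteq> 0\<^sub>m m m" using pq rs by auto
  then show ?thesis using Mc by blast
qed

lemma zm_D1: "zero_minimal_ideal S z I \<Longrightarrow> monoid_ideal S I"
  unfolding zero_minimal_ideal_def by (elim conjE)
lemma zm_D2: "zero_minimal_ideal S z I \<Longrightarrow> I \<noteq> {z}"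
  unfolding zero_minimal_ideal_def by (elim conjE)
lemma zm_D3: "zero_minimal_ideal S z I \<Longrightarrow> monoid_ideal S J \<Longrightarrow> J \<subseteq> I \<Longrightarrow> J = {z} \<or> J = I"
  unfolding zero_minimal_ideal_def by (elim conjE) (drule spec, erule impE, rule conjI, assumption+)
lemma mi_ne: "monoid_ideal S J \<Longrightarrow> J \<noteq> {}" unfolding monoid_ideal_def by (elim conjE)
lemma mi_sub: "monoid_ideal S J \<Longrightarrow> J \<subseteq> S" unfolding monoid_ideal_def by (elim conjE)
lemma mi_left: "monoid_ideal S J \<Longrightarrow> s \<in> S \<Longrightarrow> x \<in> J \<Longrightarrow> s * x \<in> J"
  unfolding monoid_ideal_def by (elim conjE) (drule bspec, assumption, drule bspec, assumption, elim conjE)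
lemma mi_right: "monoid_ideal S J \<Longrightarrow> s \<in> S \<Longrightarrow> x \<in> J \<Longrightarrow> x * s \<in> J"
  unfolding monoid_ideal_def by (elim conjE) (drule bspec, assumption, drule bspec, assumption, elim conjE)
lemma mi_intro: "J \<noteq> {} \<Longrightarrow> J \<subseteq> S \<Longrightarrow> (\<And>s x. s \<in> S \<Longrightarrow> x \<in> J \<Longrightarrow> s * x \<in> J \<and> x * s \<in> J) \<Longrightarrow> monoid_ideal S J"
  unfolding monoid_ideal_def by blast

context aut begin

abbreviation "S \<equiv> th ` lists \<Sigma>"
abbreviation Z :: "complex mat" where "Z \<equiv> 0\<^sub>m N N"

lemma prime_th:
  assumes A: "A \<in> carrier_mat N N" "A \<noteq> Z" and B: "B \<in> carrier_mat N N" "B \<noteq> Z"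
  shows "\<exists>s\<in>lists \<Sigma>. A * th s * B \<noteq> Z"
proof (rule ccontr)
  assume H: "\<not> ?thesis"
  obtain M where M: "M \<in> carrier_mat N N" "A * M * B \<noteq> Z" using mat_prime[OF A B] by blast
  define f where "f j = (if j = i then M else 0\<^sub>m (ns j) (ns j))" for j
  have "\<forall>j<k. f j \<in> carrier_mat (ns j) (ns j)" using M by (simp add: f_def)
  then obtain x where x: "x \<in> R" "\<forall>j<k. \<Phi> x j = f j" using wa_surj[OF W] by blast
  have "\<Phi> x i = M" using x ik by (simp add: f_def)
  moreover have "A * \<Phi> x i * B = Z" using prime_aux[OF x(1) A(1) B(1)] H by blast
  ultimately show False using M by simp
qed

lemma S_carrier: "x \<in> S \<Longrightarrow> x \<in> carrier_mat N N" by (metis imageE th_carrier)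

lemma S_mult: "x \<in> S \<Longrightarrow> y \<in> S \<Longrightarrow> x * y \<in> S"
proof -
  assume "x \<in> S" "y \<in> S"
  then obtain s t where "s \<in> lists \<Sigma>" "t \<in> lists \<Sigma>" "x = th s" "y = th t" by blast
  then show "x * y \<in> S" by (metis append_in_lists_conv image_eqI th_append)
qed

lemma one_in_S: "1\<^sub>m N \<in> S" using th_Nil by (metis image_eqI lists.Nil)

lemma one_neq_Z_aux: "(1\<^sub>m N :: complex mat) $$ (0, 0) \<noteq> Z $$ (0, 0)"
  using Npos by simp

lemma one_neq_Z: "1\<^sub>m N \<noteq> Z"
  using one_neq_Z_aux by metis

lemma finite_S: "finite S"
proof -
  define G :: "(nat \<Rightarrow> nat) \<Rightarrow> complex mat" where "G h = mat (n - 1) (n - 1)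
     (\<lambda>(j, k). (if h j = k then 1 else 0) - (if h (n - 1) = k then 1 else 0))" for h
  have "rho n \<delta> w = G (restrict (\<lambda>j. act \<delta> j w) {0..<n})" for w
    using npos by (intro eq_matI) (auto simp: rho_def G_def)
  moreover have "restrict (\<lambda>j. act \<delta> j w) {0..<n} \<in> PiE {0..<n} (\<lambda>_. {0..<n})" if "w \<in> lists \<Sigma>" for w
    using act_range[OF cl that] by auto
  ultimately have "rho n \<delta> w \<in> G ` PiE {0..<n} (\<lambda>_. {0..<n})" if "w \<in> lists \<Sigma>" for w
    using that by (metis image_eqI)
  then have "rho n \<delta> ` lists \<Sigma> \<subseteq> G ` PiE {0..<n} (\<lambda>_. {0..<n})" by blast
  then have "finite (rho n \<delta> ` lists \<Sigma>)" by (rule finite_subset) (intro finite_imageI finite_PiE, auto)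
  then have "finite ((\<lambda>x. \<Phi> x i) ` rho n \<delta> ` lists \<Sigma>)" by blast
  moreover have "S = (\<lambda>x. \<Phi> x i) ` rho n \<delta> ` lists \<Sigma>" by (auto simp: theta_def)
  ultimately show ?thesis by simp
qed

lemma S_ideal: "monoid_ideal S S"
  by (rule mi_intro) (use one_in_S S_mult in auto)

lemma zm_exists: "\<exists>I. zero_minimal_ideal S Z I"
proof -
  define F where "F = {J. monoid_ideal S J \<and> J \<noteq> {Z}}"
  have "F \<subseteq> Pow S" unfolding F_def using mi_sub by blast
  then have fF: "finite F" using finite_S by (meson finite_Pow_iff finite_subset)
  have "S \<in> F" unfolding F_def using S_ideal one_in_S one_neq_Z by blast
  then obtain m where m: "m \<in> F" "\<forall>b\<in>F. b \<le> m \<longrightarrow> m = b"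
    using finite_has_minimal[OF fF] by blast
  have m1: "monoid_ideal S m" "m \<noteq> {Z}" using m(1) unfolding F_def by blast+
  have "zero_minimal_ideal S Z m"
    unfolding zero_minimal_ideal_def
  proof (intro conjI allI impI)
    show "monoid_ideal S m" "m \<noteq> {Z}" by (rule m1(1), rule m1(2))
  next
    fix J assume J: "monoid_ideal S J \<and> J \<subseteq> m"
    show "J = {Z} \<or> J = m"
    proof (cases "J = {Z}")
      case False
      then have "J \<in> F" unfolding F_def using J by blast
      then have "m = J" using m(2) J by blast
      then show ?thesis by simp
    qed simp
  qed
  then show ?thesis by blast
qed

lemma ideal_nonzero: assumes "monoid_ideal S J" "J \<noteq> {Z}" shows "\<exists>x\<in>J. x \<noteq> Z"
proof -
  have "J \<noteq> {}" by (rule mi_ne[OF assms(1)])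
  moreover have "J \<subseteq> {Z}" if "\<not> ?thesis" using that by blast
  ultimately show ?thesis using assms(2) subset_singletonD by blast
qed

lemma zm_unique:
  assumes I1: "zero_minimal_ideal S Z I1" and I2: "zero_minimal_ideal S Z I2"
  shows "I1 = I2"
proof -
  have m1: "monoid_ideal S I1" "I1 \<noteq> {Z}" using zm_D1[OF I1] zm_D2[OF I1] by auto
  have m2: "monoid_ideal S I2" "I2 \<noteq> {Z}" using zm_D1[OF I2] zm_D2[OF I2] by auto
  note min1 = zm_D3[OF I1] and min2 = zm_D3[OF I2]
  obtain x where x: "x \<in> I1" "x \<noteq> Z" using ideal_nonzero[OF m1(1) m1(2)] by blast
  obtain y where y: "y \<in> I2" "y \<noteq> Z" using ideal_nonzero[OF m2(1) m2(2)] by blast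
  have xS: "x \<in> S" "y \<in> S" using x y mi_sub[OF m1(1)] mi_sub[OF m2(1)] by auto
  obtain s where s: "s \<in> lists \<Sigma>" "x * th s * y \<noteq> Z"
    using prime_th[OF S_carrier[OF xS(1)] x(2) S_carrier[OF xS(2)] y(2)] by blast
  have ts: "th s \<in> S" by (rule imageI[OF s(1)])
  have "x * th s \<in> I1" using mi_right[OF m1(1) ts x(1)] .
  then have z1: "x * th s * y \<in> I1" by (rule mi_right[OF m1(1) xS(2)])
  have "th s * y \<in> I2" using mi_left[OF m2(1) ts y(1)] .
  then have "x * (th s * y) \<in> I2" by (rule mi_left[OF m2(1) xS(1)])
  moreover have "x * (th s * y) = x * th s * y"
    by (rule assoc_mult_mat[symmetric, OF S_carrier[OF xS(1)] S_carrier[OF ts] S_carrier[OF xS(2)]])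
  ultimately have z2: "x * th s * y \<in> I2" by (simp only:)
  define K where "K = I1 \<inter> I2"
  have K: "monoid_ideal S K"
  proof (rule mi_intro)
    show "K \<noteq> {}" using z1 z2 unfolding K_def by blast
    show "K \<subseteq> S" using mi_sub[OF m1(1)] unfolding K_def by blast
    fix t z assume tz: "t \<in> S" "z \<in> K"
    then have "z \<in> I1" "z \<in> I2" unfolding K_def by simp_all
    then show "t * z \<in> K \<and> z * t \<in> K"
      unfolding K_def using mi_left[OF m1(1) tz(1)] mi_left[OF m2(1) tz(1)] mi_right[OF m1(1) tz(1)] mi_right[OF m2(1) tz(1)] by simp
  qed
  have KZ: "K \<noteq> {Z}" using z1 z2 s(2) unfolding K_def by blast
  have "K = I1" using min1[OF K] KZ unfolding K_def by blast
  moreover have "K = I2" using min2[OF K] KZ unfolding K_def by blast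
  ultimately show ?thesis by simp
qed

lemma idealI_zm: "zero_minimal_ideal S Z (idealI \<Sigma> n \<delta> ns \<Phi> i)"
proof -
  have "\<exists>!I. zero_minimal_ideal S Z I" using zm_exists zm_unique by blast
  then show ?thesis unfolding idealI_def by (rule theI')
qed

end



lemma img_append: "img n \<delta> (x @ y) = (\<lambda>q. act \<delta> q y) ` img n \<delta> x"
  unfolding img_def by (auto simp: act_append image_image)

lemma img_finite: "finite (img n \<delta> w)" unfolding img_def by simp

lemma rk_append_left: "rk n \<delta> (x @ y) \<le> rk n \<delta> x"
  unfolding rk_def img_append by (rule card_image_le[OF img_finite])

lemma rk_append_right:
  assumes cl: "\<forall>q<n. \<forall>a\<in>\<Sigma>. \<delta> q a < n" and x: "x \<in> lists \<Sigma>"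
  shows "rk n \<delta> (x @ y) \<le> rk n \<delta> y"
proof -
  have "img n \<delta> (x @ y) \<subseteq> img n \<delta> y"
    unfolding img_def using act_range[OF cl x] by (auto simp: act_append)
  then show ?thesis unfolding rk_def by (rule card_mono[OF img_finite])
qed

lemma factors_lists: "u \<in> lists \<Sigma> \<Longrightarrow> factors \<Sigma> u \<subseteq> lists \<Sigma>"
  unfolding factors_def by auto

lemma factors_ext: "w \<in> factors \<Sigma> u \<Longrightarrow> p \<in> lists \<Sigma> \<Longrightarrow> q \<in> lists \<Sigma> \<Longrightarrow> p @ w @ q \<in> factors \<Sigma> u"
proof -
  assume "w \<in> factors \<Sigma> u" and p: "p \<in> lists \<Sigma>" and q: "q \<in> lists \<Sigma>"
  then obtain x y where "w = x @ u @ y" "x \<in> lists \<Sigma>" "y \<in> lists \<Sigma>" unfolding factors_def by blast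
  then have "p @ w @ q = (p @ x) @ u @ (y @ q)" "p @ x \<in> lists \<Sigma>" "y @ q \<in> lists \<Sigma>" using p q by auto
  then show ?thesis unfolding factors_def by blast
qed

lemma card_inter_image:
  assumes f: "finite A1" "finite A2" and inj: "inj_on F A1 \<or> inj_on F A2" and c: "card (A1 \<inter> A2) > 1"
  shows "card (F ` A1 \<inter> F ` A2) > 1"
proof -
  have "inj_on F (A1 \<inter> A2)" using inj by (meson inf_le1 inf_le2 inj_on_subset)
  then have "card (F ` (A1 \<inter> A2)) = card (A1 \<inter> A2)" by (rule card_image)
  moreover have "card (F ` (A1 \<inter> A2)) \<le> card (F ` A1 \<inter> F ` A2)"
    by (rule card_mono) (use f in auto)
  ultimately show ?thesis using c by simp
qed

context aut begin

abbreviation "II \<equiv> idealI \<Sigma> n \<delta> ns \<Phi> i"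

lemma II_ideal: "monoid_ideal S II" by (rule zm_D1[OF idealI_zm])

lemma keyA:
  assumes u: "u \<in> lists \<Sigma>" and hI: "h \<in> II" and hZ: "h \<noteq> Z"
    and rep: "u_represents \<Sigma> n \<delta> ns \<Phi> u i w h"
    and w': "w' \<in> factors \<Sigma> u" and w'Z: "th w' \<noteq> Z"
  shows "rk n \<delta> w \<le> rk n \<delta> w'"
proof -
  have wf: "w \<in> factors \<Sigma> u" and thw: "th w = h"
    and mn: "h = Z \<or> (\<forall>w'\<in>factors \<Sigma> u. th w' = h \<longrightarrow> rk n \<delta> w \<le> rk n \<delta> w')"
    using rep unfolding u_represents_def by simp_all
  have mn': "\<And>w''. w'' \<in> factors \<Sigma> u \<Longrightarrow> th w'' = h \<Longrightarrow> rk n \<delta> w \<le> rk n \<delta> w''"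
    using mn hZ by blast
  have wl: "w \<in> lists \<Sigma>" using wf factors_lists[OF u] by blast
  have w'l: "w' \<in> lists \<Sigma>" using w' factors_lists[OF u] by blast
  have hc: "h \<in> carrier_mat N N" using thw th_carrier[OF wl] by simp
  obtain s where s: "s \<in> lists \<Sigma>" "h * th s * th w' \<noteq> Z"
    using prime_th[OF hc hZ th_carrier[OF w'l] w'Z] by blast
  define y where "y = h * th s * th w'"
  have "th (w @ s @ w') = th w * (th s * th w')" using wl s(1) w'l by (simp add: th_append)
  also have "\<dots> = th w * th s * th w'"
    by (rule assoc_mult_mat[symmetric, OF th_carrier[OF wl] th_carrier[OF s(1)] th_carrier[OF w'l]])
  finally have yth: "y = th (w @ s @ w')" unfolding y_def using thw by simp
  have yS: "y \<in> S" using yth wl s(1) w'l by simp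
  have ts: "th s \<in> S" "th w' \<in> S" using s(1) w'l by simp_all
  have yI: "y \<in> II" unfolding y_def
    by (rule mi_right[OF II_ideal ts(2)], rule mi_right[OF II_ideal ts(1) hI])
  define J where "J = (\<lambda>(a, b). a * y * b) ` (S \<times> S)"
  have Jmem: "a * y * b \<in> J" if "a \<in> S" "b \<in> S" for a b
    unfolding J_def using that by force
  have Jdest: "\<exists>a b. a \<in> S \<and> b \<in> S \<and> z = a * y * b" if "z \<in> J" for z
  proof -
    from that obtain ab where ab: "ab \<in> S \<times> S" "z = (\<lambda>(a, b). a * y * b) ab" unfolding J_def by (rule imageE)
    obtain a b where "ab = (a, b)" by (cases ab)
    then show ?thesis using ab by auto
  qed
  have yc: "y \<in> carrier_mat N N" using S_carrier[OF yS] .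
  have yJ: "y \<in> J"
  proof -
    have "1\<^sub>m N * y * 1\<^sub>m N = y" using yc by simp
    then show ?thesis using Jmem[OF one_in_S one_in_S] by simp
  qed
  have JI: "J \<subseteq> II"
  proof
    fix z assume "z \<in> J"
    then obtain a b where ab: "a \<in> S" "b \<in> S" "z = a * y * b" using Jdest by blast
    show "z \<in> II" unfolding ab(3)
      by (rule mi_right[OF II_ideal ab(2)], rule mi_left[OF II_ideal ab(1) yI])
  qed
  have J: "monoid_ideal S J"
  proof (rule mi_intro)
    show "J \<noteq> {}" using yJ by blast
    show "J \<subseteq> S" using JI mi_sub[OF II_ideal] by blast
    fix t z assume t: "t \<in> S" and "z \<in> J"
    then obtain a b where ab: "a \<in> S" "b \<in> S" "z = a * y * b" using Jdest by blast
    have c: "t \<in> carrier_mat N N" "a \<in> carrier_mat N N" "b \<in> carrier_mat N N"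
      using S_carrier t ab by auto
    have e1: "t * z = (t * a) * y * b" unfolding ab(3) using c yc by (simp add: assoc_mult_mat[of _ N N _ N _ N])
    have e2: "z * t = a * y * (b * t)" unfolding ab(3) using c yc by (simp add: assoc_mult_mat[of _ N N _ N _ N])
    have "t * z \<in> J" unfolding e1 by (rule Jmem[OF S_mult[OF t ab(1)] ab(2)])
    moreover have "z * t \<in> J" unfolding e2 by (rule Jmem[OF ab(1) S_mult[OF ab(2) t]])
    ultimately show "t * z \<in> J \<and> z * t \<in> J" by (rule conjI)
  qed
  have "J \<noteq> {Z}" using yJ s(2) unfolding y_def by blast
  then have "J = II" using zm_D3[OF idealI_zm J JI] by blast
  then have "h \<in> J" using hI by simp
  then obtain a b where ab: "a \<in> S" "b \<in> S" "h = a * y * b" using Jdest by blast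
  obtain p q where pq: "p \<in> lists \<Sigma>" "q \<in> lists \<Sigma>" "a = th p" "b = th q" using ab by blast
  define W where "W = (p @ w @ s) @ w' @ q"
  have "p @ w @ s \<in> lists \<Sigma>" using pq wl s(1) by simp
  then have Wf: "W \<in> factors \<Sigma> u" unfolding W_def using factors_ext[OF w' _ pq(2)] by blast
  define m where "m = w @ s @ w'"
  have ml: "m \<in> lists \<Sigma>" using wl s(1) w'l by (simp add: m_def)
  have W2: "W = p @ (m @ q)" by (simp add: W_def m_def)
  have "th W = th p * th (m @ q)" unfolding W2 by (rule th_append[OF pq(1)]) (use ml pq in simp)
  also have "\<dots> = th p * (th m * th q)" using th_append[OF ml pq(2)] by simp
  also have "\<dots> = th p * th m * th q"
    by (rule assoc_mult_mat[symmetric, OF th_carrier[OF pq(1)] th_carrier[OF ml] th_carrier[OF pq(2)]])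
  finally have "th W = th p * th (w @ s @ w') * th q" by (simp add: m_def)
  then have thW: "th W = h" using ab(3) pq yth by simp
  have "rk n \<delta> w \<le> rk n \<delta> W" by (rule mn'[OF Wf thW])
  also have "rk n \<delta> W \<le> rk n \<delta> (w' @ q)" unfolding W_def
    by (rule rk_append_right[OF cl]) (use pq wl s(1) in simp)
  also have "\<dots> \<le> rk n \<delta> w'" by (rule rk_append_left)
  finally show ?thesis .
qed

end



context aut begin

lemma rep_ext:
  assumes u: "u \<in> lists \<Sigma>" and hI: "h \<in> II" and a: "a \<in> lists \<Sigma>"
    and rep: "u_represents \<Sigma> n \<delta> ns \<Phi> u i w h"
  shows "u_represents \<Sigma> n \<delta> ns \<Phi> u i (w @ a) (h * th a)"
    and "h * th a \<noteq> Z \<Longrightarrow> rk n \<delta> (w @ a) = rk n \<delta> w"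
proof -
  have wf: "w \<in> factors \<Sigma> u" and thw: "th w = h"
    using rep unfolding u_represents_def by simp_all
  have wl: "w \<in> lists \<Sigma>" using wf factors_lists[OF u] by blast
  have waf: "w @ a \<in> factors \<Sigma> u" using factors_ext[OF wf lists.Nil a] by simp
  have thwa: "th (w @ a) = h * th a" using th_append[OF wl a] thw by simp
  have hc: "h \<in> carrier_mat N N" using thw th_carrier[OF wl] by simp
  have hZ: "h \<noteq> Z" if "h * th a \<noteq> Z"
  proof
    assume "h = Z"
    then have "h * th a = Z" using th_carrier[OF a] by simp
    then show False using that by simp
  qed
  have le1: "rk n \<delta> w \<le> rk n \<delta> w'" if "h * th a \<noteq> Z" "w' \<in> factors \<Sigma> u" "th w' \<noteq> Z" for w'
    by (rule keyA[OF u hI hZ[OF that(1)] rep that(2) that(3)])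
  show "u_represents \<Sigma> n \<delta> ns \<Phi> u i (w @ a) (h * th a)"
    unfolding u_represents_def
  proof (intro conjI)
    show "w @ a \<in> factors \<Sigma> u" by (rule waf)
    show "th (w @ a) = h * th a" by (rule thwa)
    show "h * th a = 0\<^sub>m N N \<or> (\<forall>w'\<in>factors \<Sigma> u. th w' = h * th a \<longrightarrow> rk n \<delta> (w @ a) \<le> rk n \<delta> w')"
    proof (cases "h * th a = Z")
      case False
      have "rk n \<delta> (w @ a) \<le> rk n \<delta> w'" if "w' \<in> factors \<Sigma> u" "th w' = h * th a" for w'
        using rk_append_left[of n \<delta> w a] le1[OF False that(1)] that(2) False by simp
      then show ?thesis by blast
    qed simp
  qed
  assume nz: "h * th a \<noteq> Z"
  have "rk n \<delta> w \<le> rk n \<delta> (w @ a)" using le1[OF nz waf] thwa nz by simp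
  then show "rk n \<delta> (w @ a) = rk n \<delta> w" using rk_append_left[of n \<delta> w a] by simp
qed

lemma inj_from_rk:
  assumes "rk n \<delta> (w @ a) = rk n \<delta> w"
  shows "inj_on (\<lambda>q. act \<delta> q a) (img n \<delta> w)"
  using assms unfolding rk_def img_append
  by (rule eq_card_imp_inj_on[OF img_finite])

end

theorem mainTheorem9:
  fixes n k :: nat and \<Sigma> :: "'a set" and \<delta> :: "nat \<Rightarrow> 'a \<Rightarrow> nat"
    and ns :: "nat \<Rightarrow> nat" and \<Phi> :: "complex mat \<Rightarrow> nat \<Rightarrow> complex mat"
    and v u a :: "'a list" and i :: nat and g f :: "complex mat"
  assumes "synchronizing_automaton n \<Sigma> \<delta>"
    and "wedderburn_artin (n - 1) (algR n \<Sigma> \<delta>) k ns \<Phi>"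
    and "v \<in> lists \<Sigma>"
    and "v_minimal \<Sigma> n \<delta> k ns \<Phi> v u"
    and "i \<in> supp n \<delta> k ns \<Phi> u"
    and "sigma_rel \<Sigma> n \<delta> ns \<Phi> u i g f"
    and "a \<in> lists \<Sigma>"
  shows "sigma_rel \<Sigma> n \<delta> ns \<Phi> u i (g * theta n \<delta> \<Phi> i a) (f * theta n \<delta> \<Phi> i a)"
proof -
  have cl: "\<forall>q<n. \<forall>a\<in>\<Sigma>. \<delta> q a < n" and npos: "0 < n"
    using assms(1) unfolding synchronizing_automaton_def by simp_all
  have ik: "i < k" using assms(5) unfolding supp_def by simp
  interpret aut n k \<Sigma> \<delta> ns \<Phi> i
    by unfold_locales (rule cl, rule npos, rule assms(2), rule ik)
  have uf: "u \<in> factors \<Sigma> v" using assms(4) unfolding v_minimal_def by simp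
  then have ul: "u \<in> lists \<Sigma>" using assms(3) unfolding factors_def by auto
  have gI: "g \<in> II" and fI: "f \<in> II"
    and alt: "g = f \<or> (\<exists>w1 w2. u_represents \<Sigma> n \<delta> ns \<Phi> u i w1 g \<and> u_represents \<Sigma> n \<delta> ns \<Phi> u i w2 f \<and>
                 card (img n \<delta> w1 \<inter> img n \<delta> w2) > 1)"
    using assms(6) unfolding sigma_rel_def by simp_all
  have tS: "th a \<in> S" using assms(7) by (rule imageI)
  have gaI: "g * th a \<in> II" by (rule mi_right[OF II_ideal tS gI])
  have faI: "f * th a \<in> II" by (rule mi_right[OF II_ideal tS fI])
  show ?thesis
  proof (cases "g * th a = f * th a")
    case True
    then show ?thesis unfolding sigma_rel_def using gaI faI by simp
  next
    case neq: False
    then have "g \<noteq> f" by auto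
    then obtain w1 w2 where r1: "u_represents \<Sigma> n \<delta> ns \<Phi> u i w1 g"
      and r2: "u_represents \<Sigma> n \<delta> ns \<Phi> u i w2 f" and c: "card (img n \<delta> w1 \<inter> img n \<delta> w2) > 1"
      using alt by blast
    have r1': "u_represents \<Sigma> n \<delta> ns \<Phi> u i (w1 @ a) (g * th a)"
      by (rule rep_ext(1)[OF ul gI assms(7) r1])
    have r2': "u_represents \<Sigma> n \<delta> ns \<Phi> u i (w2 @ a) (f * th a)"
      by (rule rep_ext(1)[OF ul fI assms(7) r2])
    have "g * th a \<noteq> Z \<or> f * th a \<noteq> Z" using neq by auto
    then have inj: "inj_on (\<lambda>q. act \<delta> q a) (img n \<delta> w1) \<or> inj_on (\<lambda>q. act \<delta> q a) (img n \<delta> w2)"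
      using inj_from_rk rep_ext(2)[OF ul gI assms(7) r1] rep_ext(2)[OF ul fI assms(7) r2] by blast
    have "card (img n \<delta> (w1 @ a) \<inter> img n \<delta> (w2 @ a)) > 1"
      unfolding img_append by (rule card_inter_image[OF img_finite img_finite inj c])
    then show ?thesis unfolding sigma_rel_def using gaI faI r1' r2' by blast
  qed
qed


end
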